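(* Let $R$ be a ring and $M$ a left $R$-module. Then $\xi(M)$ is hollow in $R\text{-}\mathrm{Tors}$ if and only if the set $\{\chi(M/N)\mid N\subsetneq M\text{ a submodule}\}$ is directed (any two members have an upper bound in the set).
   Context: $R\text{-}\mathrm{Tors}$ is the lattice of hereditary torsion theories on left $R$-modules, ordered by $\tau\leq\sigma$ iff the torsion class $\mathbb{T}_\tau\subseteq\mathbb{T}_\sigma$; $\bigwedge U$ is the theory with torsion class $\bigcap_{\tau\in U}\mathbb{T}_\tau$ and $\bigvee U$ the theory with torsionfree class $\bigcap_{\tau\in U}\mathbb{F}_\tau$. $\xi(M)$ is the least torsion theory for which $M$ is torsion, $\chi(M)$ the greatest for which $M$ is torsionfree. An element $\tau$ is hollow in $R\text{-}\mathrm{Tors}$ if it is irreducible in the dual lattice, i.e. for all $\alpha,\beta\leq\tau$ with $\tau\leq\alpha\vee\beta$ one has $\tau\leq\alpha$ or $\tau\leq\beta$. *)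

theory Defs
  imports "HOL-Algebra.Algebra"
begin

text \<open>Left modules over a (not necessarily commutative) ring.  The library locale
  module requires a commutative ring, so we use its axioms with ring R.\<close>

definition left_module :: "('a, 'c) ring_scheme \<Rightarrow> ('a, 'b, 'd) module_scheme \<Rightarrow> bool" where
  "left_module R M \<longleftrightarrow> ring R \<and> abelian_group M \<and> module_axioms R M"

definition left_submodule :: "('a, 'c) ring_scheme \<Rightarrow> ('a, 'b, 'd) module_scheme \<Rightarrow> 'b set \<Rightarrow> bool" where
  "left_submodule R M N \<longleftrightarrow> N \<subseteq> carrier M \<and> subgroup N (add_monoid M) \<and>
     (\<forall>r\<in>carrier R. \<forall>x\<in>N. r \<odot>\<^bsub>M\<^esub> x \<in> N)"

definition quot_module :: "('a, 'c) ring_scheme \<Rightarrow> ('a, 'b, 'd) module_scheme \<Rightarrow> 'b set \<Rightarrow> ('a, 'b set) module" where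
  "quot_module R M N =
     \<lparr> carrier = a_rcosets\<^bsub>M\<^esub> N,
       monoid.mult = (\<lambda>U V. N), monoid.one = N,
       ring.zero = N,
       ring.add = (\<lambda>U V. U <+>\<^bsub>M\<^esub> V),
       module.smult = (\<lambda>r U. \<Union>m\<in>U. N +>\<^bsub>M\<^esub> (r \<odot>\<^bsub>M\<^esub> m)) \<rparr>"

definition left_ideal :: "('a, 'c) ring_scheme \<Rightarrow> 'a set \<Rightarrow> bool" where
  "left_ideal R I \<longleftrightarrow> I \<subseteq> carrier R \<and> subgroup I (add_monoid R) \<and>
     (\<forall>r\<in>carrier R. \<forall>x\<in>I. r \<otimes>\<^bsub>R\<^esub> x \<in> I)"

definition lquot :: "('a, 'c) ring_scheme \<Rightarrow> 'a set \<Rightarrow> 'a \<Rightarrow> 'a set" where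
  "lquot R I a = {r \<in> carrier R. r \<otimes>\<^bsub>R\<^esub> a \<in> I}"

text \<open>Gabriel filters (Gabriel topologies) of left ideals; the lattice R-Tors of hereditary
  torsion theories is identified with the lattice of Gabriel filters ordered by inclusion
  (torsion class of F: modules all of whose elements have annihilator in F).\<close>
definition gabriel :: "('a, 'c) ring_scheme \<Rightarrow> 'a set set \<Rightarrow> bool" where
  "gabriel R F \<longleftrightarrow>
     (\<forall>I\<in>F. left_ideal R I) \<and> carrier R \<in> F \<and>
     (\<forall>I\<in>F. \<forall>J. left_ideal R J \<and> I \<subseteq> J \<longrightarrow> J \<in> F) \<and>
     (\<forall>I\<in>F. \<forall>J\<in>F. I \<inter> J \<in> F) \<and>
     (\<forall>I\<in>F. \<forall>a\<in>carrier R. lquot R I a \<in> F) \<and>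
     (\<forall>J. left_ideal R J \<and> (\<exists>I\<in>F. \<forall>a\<in>I. lquot R J a \<in> F) \<longrightarrow> J \<in> F)"

definition ann :: "('a, 'c) ring_scheme \<Rightarrow> ('a, 'b, 'd) module_scheme \<Rightarrow> 'b \<Rightarrow> 'a set" where
  "ann R M m = {r \<in> carrier R. r \<odot>\<^bsub>M\<^esub> m = \<zero>\<^bsub>M\<^esub>}"

definition is_torsion :: "('a, 'c) ring_scheme \<Rightarrow> 'a set set \<Rightarrow> ('a, 'b, 'd) module_scheme \<Rightarrow> bool" where
  "is_torsion R F M \<longleftrightarrow> (\<forall>m\<in>carrier M. ann R M m \<in> F)"

definition is_torsionfree :: "('a, 'c) ring_scheme \<Rightarrow> 'a set set \<Rightarrow> ('a, 'b, 'd) module_scheme \<Rightarrow> bool" where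
  "is_torsionfree R F M \<longleftrightarrow> (\<forall>m\<in>carrier M. ann R M m \<in> F \<longrightarrow> m = \<zero>\<^bsub>M\<^esub>)"

definition xi :: "('a, 'c) ring_scheme \<Rightarrow> ('a, 'b, 'd) module_scheme \<Rightarrow> 'a set set" where
  "xi R M = (LEAST F. gabriel R F \<and> is_torsion R F M)"

definition chi :: "('a, 'c) ring_scheme \<Rightarrow> ('a, 'b, 'd) module_scheme \<Rightarrow> 'a set set" where
  "chi R M = (GREATEST F. gabriel R F \<and> is_torsionfree R F M)"

definition tors_join :: "('a, 'c) ring_scheme \<Rightarrow> 'a set set \<Rightarrow> 'a set set \<Rightarrow> 'a set set" where
  "tors_join R A B = \<Inter>{G. gabriel R G \<and> A \<union> B \<subseteq> G}"

definition hollow :: "('a, 'c) ring_scheme \<Rightarrow> 'a set set \<Rightarrow> bool" where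
  "hollow R T \<longleftrightarrow> gabriel R T \<and>
     (\<forall>A B. gabriel R A \<and> gabriel R B \<and> A \<subseteq> T \<and> B \<subseteq> T \<and> T \<subseteq> tors_join R A B
        \<longrightarrow> T \<subseteq> A \<or> T \<subseteq> B)"

definition directed_set :: "'a set set set \<Rightarrow> bool" where
  "directed_set S \<longleftrightarrow> (\<forall>A\<in>S. \<forall>B\<in>S. \<exists>C\<in>S. A \<subseteq> C \<and> B \<subseteq> C)"

end

theory Submission
  imports Defs
begin

context ring begin

lemma left_idealI:
  assumes "I \<subseteq> carrier R" "\<zero> \<in> I" "\<And>x y. x \<in> I \<Longrightarrow> y \<in> I \<Longrightarrow> x \<oplus> y \<in> I"
    "\<And>x. x \<in> I \<Longrightarrow> \<ominus> x \<in> I" "\<And>r x. r \<in> carrier R \<Longrightarrow> x \<in> I \<Longrightarrow> r \<otimes> x \<in> I"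
  shows "left_ideal R I"
  unfolding left_ideal_def
proof (intro conjI ballI)
  show "subgroup I (add_monoid R)"
    by (rule add.subgroupI) (use assms in \<open>auto simp: a_inv_def[symmetric]\<close>)
qed (use assms in auto)

lemma left_idealD:
  assumes "left_ideal R I"
  shows "I \<subseteq> carrier R" "\<zero> \<in> I" "\<And>x y. x \<in> I \<Longrightarrow> y \<in> I \<Longrightarrow> x \<oplus> y \<in> I"
    "\<And>x. x \<in> I \<Longrightarrow> \<ominus> x \<in> I" "\<And>r x. r \<in> carrier R \<Longrightarrow> x \<in> I \<Longrightarrow> r \<otimes> x \<in> I"
proof -
  interpret additive_subgroup I R using assms unfolding left_ideal_def additive_subgroup_def by auto
  show "I \<subseteq> carrier R" "\<zero> \<in> I" "\<And>x y. x \<in> I \<Longrightarrow> y \<in> I \<Longrightarrow> x \<oplus> y \<in> I"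
    "\<And>x. x \<in> I \<Longrightarrow> \<ominus> x \<in> I" by auto
  show "\<And>r x. r \<in> carrier R \<Longrightarrow> x \<in> I \<Longrightarrow> r \<otimes> x \<in> I" using assms unfolding left_ideal_def by auto
qed

lemma left_ideal_carrier: "left_ideal R (carrier R)"
  by (rule left_idealI) auto

lemma left_ideal_Int: "left_ideal R I \<Longrightarrow> left_ideal R J \<Longrightarrow> left_ideal R (I \<inter> J)"
  by (rule left_idealI) (auto dest: left_idealD)

lemma left_ideal_lquot:
  assumes I: "left_ideal R I" and a: "a \<in> carrier R"
  shows "left_ideal R (lquot R I a)"
proof (rule left_idealI)
  note D = left_idealD[OF I]
  show "lquot R I a \<subseteq> carrier R" unfolding lquot_def by auto
  show "\<zero> \<in> lquot R I a" unfolding lquot_def using a D by auto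
  show "x \<oplus> y \<in> lquot R I a" if "x \<in> lquot R I a" "y \<in> lquot R I a" for x y
  proof -
    have c: "x \<in> carrier R" "y \<in> carrier R" "x \<otimes> a \<in> I" "y \<otimes> a \<in> I" using that unfolding lquot_def by auto
    then have "(x \<oplus> y) \<otimes> a = x \<otimes> a \<oplus> y \<otimes> a" using a by (simp add: l_distr)
    then show ?thesis using c D(3)[OF c(3,4)] unfolding lquot_def by simp
  qed
  show "\<ominus> x \<in> lquot R I a" if "x \<in> lquot R I a" for x
  proof -
    have c: "x \<in> carrier R" "x \<otimes> a \<in> I" using that unfolding lquot_def by auto
    then have "(\<ominus> x) \<otimes> a = \<ominus> (x \<otimes> a)" using a by (simp add: l_minus)
    then show ?thesis using c D(4)[OF c(2)] unfolding lquot_def by simp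
  qed
  show "r \<otimes> x \<in> lquot R I a" if "r \<in> carrier R" "x \<in> lquot R I a" for r x
  proof -
    have c: "x \<in> carrier R" "x \<otimes> a \<in> I" using that unfolding lquot_def by auto
    then have "(r \<otimes> x) \<otimes> a = r \<otimes> (x \<otimes> a)" using a that by (simp add: m_assoc)
    then show ?thesis using c D(5)[OF that(1) c(2)] that unfolding lquot_def by simp
  qed
qed

lemma gabriel_all: "gabriel R {I. left_ideal R I}"
  unfolding gabriel_def by (auto simp: left_ideal_carrier left_ideal_Int left_ideal_lquot)

lemma gabrielD1: "gabriel R F \<Longrightarrow> I \<in> F \<Longrightarrow> left_ideal R I"
  unfolding gabriel_def by blast
lemma gabrielD2: "gabriel R F \<Longrightarrow> carrier R \<in> F"
  unfolding gabriel_def by blast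
lemma gabrielD4: "gabriel R F \<Longrightarrow> I \<in> F \<Longrightarrow> J \<in> F \<Longrightarrow> I \<inter> J \<in> F"
  unfolding gabriel_def by blast
lemma gabrielD5: "gabriel R F \<Longrightarrow> I \<in> F \<Longrightarrow> a \<in> carrier R \<Longrightarrow> lquot R I a \<in> F"
  unfolding gabriel_def by blast

lemma gabrielD6:
  assumes "gabriel R F" "left_ideal R J" "I \<in> F" "\<And>a. a \<in> I \<Longrightarrow> lquot R J a \<in> F"
  shows "J \<in> F"
proof -
  have "\<forall>J. left_ideal R J \<and> (\<exists>I\<in>F. \<forall>a\<in>I. lquot R J a \<in> F) \<longrightarrow> J \<in> F"
    using assms(1) unfolding gabriel_def by (elim conjE)
  moreover have "left_ideal R J \<and> (\<exists>I\<in>F. \<forall>a\<in>I. lquot R J a \<in> F)" using assms(2-) by blast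
  ultimately show ?thesis by blast
qed

lemma gabriel_Inter:
  assumes "S \<noteq> {}" "\<And>F. F \<in> S \<Longrightarrow> gabriel R F"
  shows "gabriel R (\<Inter>S)"
proof -
  obtain F0 where F0: "F0 \<in> S" using assms by auto
  have gF: "gabriel R F" if "F \<in> S" for F using assms(2) that .
  have g1: "left_ideal R I" if "F \<in> S" "I \<in> F" for F I
    using gF[OF that(1)] that(2) unfolding gabriel_def by blast
  have g2: "carrier R \<in> F" if "F \<in> S" for F
    using gF[OF that(1)] unfolding gabriel_def by blast
  have g3: "J \<in> F" if "F \<in> S" "I \<in> F" "left_ideal R J" "I \<subseteq> J" for F I J
    using gF[OF that(1)] that(2-) unfolding gabriel_def by blast
  have g4: "I \<inter> J \<in> F" if "F \<in> S" "I \<in> F" "J \<in> F" for F I J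
    using gF[OF that(1)] that(2-) unfolding gabriel_def by blast
  have g5: "lquot R I a \<in> F" if "F \<in> S" "I \<in> F" "a \<in> carrier R" for F I a
    using gF[OF that(1)] that(2-) unfolding gabriel_def by blast
  have g6: "\<And>F I J. F \<in> S \<Longrightarrow> left_ideal R J \<Longrightarrow> I \<in> F \<Longrightarrow> (\<And>a. a \<in> I \<Longrightarrow> lquot R J a \<in> F) \<Longrightarrow> J \<in> F"
  proof -
    fix F I J assume "F \<in> S" "left_ideal R J" "I \<in> F" "\<And>a. a \<in> I \<Longrightarrow> lquot R J a \<in> F"
    then show "J \<in> F" using gabrielD6[OF gF] by blast
  qed
  show ?thesis unfolding gabriel_def
  proof (intro conjI ballI allI impI)
    fix I assume "I \<in> \<Inter>S" then show "left_ideal R I" using F0 g1 by blast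
  next
    show "carrier R \<in> \<Inter>S" using g2 by blast
  next
    fix I J assume "I \<in> \<Inter>S" "left_ideal R J \<and> I \<subseteq> J" then show "J \<in> \<Inter>S"
      using g3 by blast
  next
    fix I J assume "I \<in> \<Inter>S" "J \<in> \<Inter>S" then show "I \<inter> J \<in> \<Inter>S"
      using g4 by blast
  next
    fix I a assume "I \<in> \<Inter>S" "a \<in> carrier R" then show "lquot R I a \<in> \<Inter>S"
      using g5 by blast
  next
    fix J assume J: "left_ideal R J \<and> (\<exists>I\<in>\<Inter>S. \<forall>a\<in>I. lquot R J a \<in> \<Inter>S)"
    then obtain I where I: "I \<in> \<Inter>S" "\<And>a. a \<in> I \<Longrightarrow> lquot R J a \<in> \<Inter>S" by auto
    show "J \<in> \<Inter>S"
    proof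
      fix F assume F: "F \<in> S"
      show "J \<in> F"
      proof (rule g6[OF F])
        show "left_ideal R J" using J by simp
        show "I \<in> F" using I F by blast
        show "lquot R J a \<in> F" if "a \<in> I" for a using I(2)[OF that] F by blast
      qed
    qed
  qed
qed

lemma gabriel_Int: "gabriel R A \<Longrightarrow> gabriel R B \<Longrightarrow> gabriel R (A \<inter> B)"
  using gabriel_Inter[of "{A, B}"] by auto

lemma gabriel_up: "gabriel R F \<Longrightarrow> I \<in> F \<Longrightarrow> left_ideal R J \<Longrightarrow> I \<subseteq> J \<Longrightarrow> J \<in> F"
  unfolding gabriel_def by blast

lemma tors_join_gabriel:
  assumes "gabriel R A" "gabriel R B"
  shows "gabriel R (tors_join R A B)" "A \<subseteq> tors_join R A B" "B \<subseteq> tors_join R A B"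
proof -
  have "{I. left_ideal R I} \<in> {G. gabriel R G \<and> A \<union> B \<subseteq> G}"
    using gabriel_all gabrielD1[OF assms(1)] gabrielD1[OF assms(2)] by blast
  then have ne: "{G. gabriel R G \<and> A \<union> B \<subseteq> G} \<noteq> {}" by blast
  show "gabriel R (tors_join R A B)" unfolding tors_join_def by (rule gabriel_Inter[OF ne]) auto
  show "A \<subseteq> tors_join R A B" "B \<subseteq> tors_join R A B" unfolding tors_join_def by auto
qed

end

locale lmod =
  fixes R :: "('a, 'c) ring_scheme" and M :: "('a, 'b, 'd) module_scheme"
  assumes lm: "left_module R M"
begin

lemma ringR: "ring R" using lm unfolding left_module_def by simp
lemma abgM: "abelian_group M" using lm unfolding left_module_def by simp

sublocale R: ring R by (rule ringR)
sublocale M: abelian_group M by (rule abgM)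

lemma sm_closed: "r \<in> carrier R \<Longrightarrow> x \<in> carrier M \<Longrightarrow> r \<odot>\<^bsub>M\<^esub> x \<in> carrier M"
  and sm_ldistr: "r \<in> carrier R \<Longrightarrow> s \<in> carrier R \<Longrightarrow> x \<in> carrier M \<Longrightarrow>
      (r \<oplus>\<^bsub>R\<^esub> s) \<odot>\<^bsub>M\<^esub> x = r \<odot>\<^bsub>M\<^esub> x \<oplus>\<^bsub>M\<^esub> s \<odot>\<^bsub>M\<^esub> x"
  and sm_rdistr: "r \<in> carrier R \<Longrightarrow> x \<in> carrier M \<Longrightarrow> y \<in> carrier M \<Longrightarrow>
      r \<odot>\<^bsub>M\<^esub> (x \<oplus>\<^bsub>M\<^esub> y) = r \<odot>\<^bsub>M\<^esub> x \<oplus>\<^bsub>M\<^esub> r \<odot>\<^bsub>M\<^esub> y"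
  and sm_assoc: "r \<in> carrier R \<Longrightarrow> s \<in> carrier R \<Longrightarrow> x \<in> carrier M \<Longrightarrow>
      (r \<otimes>\<^bsub>R\<^esub> s) \<odot>\<^bsub>M\<^esub> x = r \<odot>\<^bsub>M\<^esub> (s \<odot>\<^bsub>M\<^esub> x)"
  and sm_one: "x \<in> carrier M \<Longrightarrow> \<one>\<^bsub>R\<^esub> \<odot>\<^bsub>M\<^esub> x = x"
  using lm unfolding left_module_def module_axioms_def by auto

lemma sm_zero_l: assumes "x \<in> carrier M" shows "\<zero>\<^bsub>R\<^esub> \<odot>\<^bsub>M\<^esub> x = \<zero>\<^bsub>M\<^esub>"
proof -
  have c: "\<zero>\<^bsub>R\<^esub> \<odot>\<^bsub>M\<^esub> x \<in> carrier M" using assms by (simp add: sm_closed)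
  have "\<zero>\<^bsub>R\<^esub> \<odot>\<^bsub>M\<^esub> x = (\<zero>\<^bsub>R\<^esub> \<oplus>\<^bsub>R\<^esub> \<zero>\<^bsub>R\<^esub>) \<odot>\<^bsub>M\<^esub> x" by simp
  also have "\<dots> = \<zero>\<^bsub>R\<^esub> \<odot>\<^bsub>M\<^esub> x \<oplus>\<^bsub>M\<^esub> \<zero>\<^bsub>R\<^esub> \<odot>\<^bsub>M\<^esub> x" using assms by (intro sm_ldistr) auto
  finally show ?thesis using M.add.l_cancel_one[OF c c] by simp
qed

lemma sm_zero_r: assumes "r \<in> carrier R" shows "r \<odot>\<^bsub>M\<^esub> \<zero>\<^bsub>M\<^esub> = \<zero>\<^bsub>M\<^esub>"
proof -
  have c: "r \<odot>\<^bsub>M\<^esub> \<zero>\<^bsub>M\<^esub> \<in> carrier M" using assms by (simp add: sm_closed)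
  have "r \<odot>\<^bsub>M\<^esub> \<zero>\<^bsub>M\<^esub> = r \<odot>\<^bsub>M\<^esub> (\<zero>\<^bsub>M\<^esub> \<oplus>\<^bsub>M\<^esub> \<zero>\<^bsub>M\<^esub>)" by simp
  also have "\<dots> = r \<odot>\<^bsub>M\<^esub> \<zero>\<^bsub>M\<^esub> \<oplus>\<^bsub>M\<^esub> r \<odot>\<^bsub>M\<^esub> \<zero>\<^bsub>M\<^esub>" using assms by (intro sm_rdistr) auto
  finally show ?thesis using M.add.l_cancel_one[OF c c] by simp
qed

lemma sm_minus_l: assumes "r \<in> carrier R" "x \<in> carrier M"
  shows "(\<ominus>\<^bsub>R\<^esub> r) \<odot>\<^bsub>M\<^esub> x = \<ominus>\<^bsub>M\<^esub> (r \<odot>\<^bsub>M\<^esub> x)"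
proof -
  have "(\<ominus>\<^bsub>R\<^esub> r) \<odot>\<^bsub>M\<^esub> x \<oplus>\<^bsub>M\<^esub> r \<odot>\<^bsub>M\<^esub> x = ((\<ominus>\<^bsub>R\<^esub> r) \<oplus>\<^bsub>R\<^esub> r) \<odot>\<^bsub>M\<^esub> x"
    using assms by (intro sm_ldistr[symmetric]) auto
  also have "\<dots> = \<zero>\<^bsub>M\<^esub>" using assms by (simp add: R.l_neg sm_zero_l)
  finally show ?thesis using assms by (metis M.minus_equality R.a_inv_closed sm_closed)
qed

lemma sm_minus_r: assumes "r \<in> carrier R" "x \<in> carrier M"
  shows "r \<odot>\<^bsub>M\<^esub> (\<ominus>\<^bsub>M\<^esub> x) = \<ominus>\<^bsub>M\<^esub> (r \<odot>\<^bsub>M\<^esub> x)"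
proof -
  have "r \<odot>\<^bsub>M\<^esub> (\<ominus>\<^bsub>M\<^esub> x) \<oplus>\<^bsub>M\<^esub> r \<odot>\<^bsub>M\<^esub> x = r \<odot>\<^bsub>M\<^esub> ((\<ominus>\<^bsub>M\<^esub> x) \<oplus>\<^bsub>M\<^esub> x)"
    using assms by (intro sm_rdistr[symmetric]) auto
  also have "\<dots> = \<zero>\<^bsub>M\<^esub>" using assms by (simp add: M.l_neg sm_zero_r)
  finally show ?thesis using assms by (metis M.minus_equality M.a_inv_closed sm_closed)
qed

lemma ann_left_ideal: assumes "x \<in> carrier M" shows "left_ideal R (ann R M x)"
proof (rule R.left_idealI)
  show "ann R M x \<subseteq> carrier R" unfolding ann_def by auto
  show "\<zero>\<^bsub>R\<^esub> \<in> ann R M x" unfolding ann_def using assms sm_zero_l by simp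
  show "a \<oplus>\<^bsub>R\<^esub> b \<in> ann R M x" if "a \<in> ann R M x" "b \<in> ann R M x" for a b
    using that assms unfolding ann_def by (simp add: sm_ldistr)
  show "\<ominus>\<^bsub>R\<^esub> a \<in> ann R M x" if "a \<in> ann R M x" for a
    using that assms unfolding ann_def by (simp add: sm_minus_l)
  show "r \<otimes>\<^bsub>R\<^esub> a \<in> ann R M x" if "r \<in> carrier R" "a \<in> ann R M x" for r a
    using that assms unfolding ann_def by (simp add: sm_assoc sm_zero_r)
qed

lemma ann_smult: assumes "r \<in> carrier R" "x \<in> carrier M"
  shows "ann R M (r \<odot>\<^bsub>M\<^esub> x) = lquot R (ann R M x) r"
  using assms unfolding ann_def lquot_def by (auto simp: sm_assoc)

lemma ann_add: assumes "x \<in> carrier M" "y \<in> carrier M"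
  shows "ann R M x \<inter> ann R M y \<subseteq> ann R M (x \<oplus>\<^bsub>M\<^esub> y)"
  using assms unfolding ann_def by (auto simp: sm_rdistr)

lemma ann_neg: assumes "x \<in> carrier M"
  shows "ann R M x \<subseteq> ann R M (\<ominus>\<^bsub>M\<^esub> x)"
  using assms unfolding ann_def by (auto simp: sm_minus_r)

lemma ann_zero: "ann R M \<zero>\<^bsub>M\<^esub> = carrier R"
  unfolding ann_def by (auto simp: sm_zero_r)

lemma left_submoduleI:
  assumes "N \<subseteq> carrier M" "\<zero>\<^bsub>M\<^esub> \<in> N" "\<And>x y. x \<in> N \<Longrightarrow> y \<in> N \<Longrightarrow> x \<oplus>\<^bsub>M\<^esub> y \<in> N"
    "\<And>x. x \<in> N \<Longrightarrow> \<ominus>\<^bsub>M\<^esub> x \<in> N" "\<And>r x. r \<in> carrier R \<Longrightarrow> x \<in> N \<Longrightarrow> r \<odot>\<^bsub>M\<^esub> x \<in> N"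
  shows "left_submodule R M N"
  unfolding left_submodule_def
proof (intro conjI ballI)
  show "subgroup N (add_monoid M)"
    by (rule M.add.subgroupI) (use assms in \<open>auto simp: a_inv_def[symmetric]\<close>)
qed (use assms in auto)

definition tor :: "'a set set \<Rightarrow> 'b set" where
  "tor F = {m \<in> carrier M. ann R M m \<in> F}"

lemma tor_submodule: assumes g: "gabriel R F" shows "left_submodule R M (tor F)"
proof (rule left_submoduleI)
  show "tor F \<subseteq> carrier M" unfolding tor_def by auto
  show "\<zero>\<^bsub>M\<^esub> \<in> tor F" unfolding tor_def using ann_zero R.gabrielD2[OF g] by simp
  show "x \<oplus>\<^bsub>M\<^esub> y \<in> tor F" if "x \<in> tor F" "y \<in> tor F" for x y
  proof -
    have c: "x \<in> carrier M" "y \<in> carrier M" "ann R M x \<in> F" "ann R M y \<in> F" using that unfolding tor_def by auto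
    have "ann R M (x \<oplus>\<^bsub>M\<^esub> y) \<in> F"
      by (rule R.gabriel_up[OF g R.gabrielD4[OF g c(3,4)]]) (use c ann_left_ideal ann_add in auto)
    then show ?thesis using c unfolding tor_def by auto
  qed
  show "\<ominus>\<^bsub>M\<^esub> x \<in> tor F" if "x \<in> tor F" for x
  proof -
    have c: "x \<in> carrier M" "ann R M x \<in> F" using that unfolding tor_def by auto
    have "ann R M (\<ominus>\<^bsub>M\<^esub> x) \<in> F"
      by (rule R.gabriel_up[OF g c(2)]) (use c ann_left_ideal ann_neg in auto)
    then show ?thesis using c unfolding tor_def by auto
  qed
  show "r \<odot>\<^bsub>M\<^esub> x \<in> tor F" if "r \<in> carrier R" "x \<in> tor F" for r x
  proof -
    have c: "x \<in> carrier M" "ann R M x \<in> F" using that unfolding tor_def by auto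
    have "ann R M (r \<odot>\<^bsub>M\<^esub> x) \<in> F"
      using ann_smult[OF that(1) c(1)] R.gabrielD5[OF g c(2) that(1)] by simp
    then show ?thesis using c that sm_closed unfolding tor_def by auto
  qed
qed

end

locale lmodq = lmod +
  fixes N assumes sub: "left_submodule R M N"
begin

abbreviation Q where "Q \<equiv> quot_module R M N"

lemma N_add_subgroup: "additive_subgroup N M"
  using sub unfolding left_submodule_def additive_subgroup_def by simp

sublocale NS: abelian_subgroup N M
  by (rule abelian_subgroupI3[OF N_add_subgroup abgM])

lemma N_sub: "N \<subseteq> carrier M" using sub unfolding left_submodule_def by simp
lemma N_smult: "r \<in> carrier R \<Longrightarrow> x \<in> N \<Longrightarrow> r \<odot>\<^bsub>M\<^esub> x \<in> N"
  using sub unfolding left_submodule_def by simp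

lemma carrier_Q: "carrier Q = (\<lambda>x. N +>\<^bsub>M\<^esub> x) ` carrier M"
  unfolding quot_module_def by (auto simp: A_RCOSETS_def'[of M N])

lemma zero_Q: "\<zero>\<^bsub>Q\<^esub> = N" unfolding quot_module_def by simp
lemma add_Q: "U \<oplus>\<^bsub>Q\<^esub> V = U <+>\<^bsub>M\<^esub> V" unfolding quot_module_def by simp
lemma smult_Q: "r \<odot>\<^bsub>Q\<^esub> U = (\<Union>m\<in>U. N +>\<^bsub>M\<^esub> (r \<odot>\<^bsub>M\<^esub> m))" unfolding quot_module_def by simp

lemma coset_add: "x \<in> carrier M \<Longrightarrow> y \<in> carrier M \<Longrightarrow>
   (N +>\<^bsub>M\<^esub> x) \<oplus>\<^bsub>Q\<^esub> (N +>\<^bsub>M\<^esub> y) = N +>\<^bsub>M\<^esub> (x \<oplus>\<^bsub>M\<^esub> y)"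
  using NS.a_rcos_sum by (simp add: add_Q)

lemma coset_smult: assumes r: "r \<in> carrier R" and x: "x \<in> carrier M"
  shows "r \<odot>\<^bsub>Q\<^esub> (N +>\<^bsub>M\<^esub> x) = N +>\<^bsub>M\<^esub> (r \<odot>\<^bsub>M\<^esub> x)"
proof -
  have "N +>\<^bsub>M\<^esub> (r \<odot>\<^bsub>M\<^esub> m) = N +>\<^bsub>M\<^esub> (r \<odot>\<^bsub>M\<^esub> x)" if m: "m \<in> N +>\<^bsub>M\<^esub> x" for m
  proof -
    from m obtain n where n: "n \<in> N" "m = n \<oplus>\<^bsub>M\<^esub> x" unfolding a_r_coset_def'[of M N x] by auto
    have nc: "n \<in> carrier M" using n N_sub by auto
    have "r \<odot>\<^bsub>M\<^esub> m = r \<odot>\<^bsub>M\<^esub> n \<oplus>\<^bsub>M\<^esub> r \<odot>\<^bsub>M\<^esub> x" using n nc r x by (simp add: sm_rdistr)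
    moreover have "r \<odot>\<^bsub>M\<^esub> n \<oplus>\<^bsub>M\<^esub> r \<odot>\<^bsub>M\<^esub> x \<in> N +>\<^bsub>M\<^esub> (r \<odot>\<^bsub>M\<^esub> x)"
      using N_smult[OF r n(1)] N_sub r x sm_closed by (intro M.a_rcosI) auto
    ultimately show ?thesis
      using M.a_repr_independence[of "r \<odot>\<^bsub>M\<^esub> m" N "r \<odot>\<^bsub>M\<^esub> x"] NS.a_subgroup r x sm_closed by auto
  qed
  moreover have "x \<in> N +>\<^bsub>M\<^esub> x" using NS.a_rcos_self x by simp
  ultimately show ?thesis unfolding smult_Q by blast
qed

lemma coset_eq_N: "x \<in> carrier M \<Longrightarrow> (N +>\<^bsub>M\<^esub> x = N) \<longleftrightarrow> x \<in> N"
  using NS.a_rcos_const NS.a_rcos_self by metis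

lemma Q_cases: "U \<in> carrier Q \<Longrightarrow> (\<And>x. x \<in> carrier M \<Longrightarrow> U = N +>\<^bsub>M\<^esub> x \<Longrightarrow> P) \<Longrightarrow> P"
  unfolding carrier_Q by auto

lemma coset_in_Q: "x \<in> carrier M \<Longrightarrow> N +>\<^bsub>M\<^esub> x \<in> carrier Q"
  unfolding carrier_Q by auto

lemma abelian_group_Q: "abelian_group Q"
proof (rule abelian_groupI)
  fix U V assume "U \<in> carrier Q" "V \<in> carrier Q"
  then show "U \<oplus>\<^bsub>Q\<^esub> V \<in> carrier Q"
    by (auto elim!: Q_cases simp: coset_add coset_in_Q)
next
  show "\<zero>\<^bsub>Q\<^esub> \<in> carrier Q" using coset_in_Q[of "\<zero>\<^bsub>M\<^esub>"] coset_eq_N[of "\<zero>\<^bsub>M\<^esub>"] NS.zero_closed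
    by (simp add: zero_Q)
next
  fix U V W assume "U \<in> carrier Q" "V \<in> carrier Q" "W \<in> carrier Q"
  then show "U \<oplus>\<^bsub>Q\<^esub> V \<oplus>\<^bsub>Q\<^esub> W = U \<oplus>\<^bsub>Q\<^esub> (V \<oplus>\<^bsub>Q\<^esub> W)"
    by (auto elim!: Q_cases simp: coset_add M.a_assoc)
next
  fix U V assume "U \<in> carrier Q" "V \<in> carrier Q"
  then show "U \<oplus>\<^bsub>Q\<^esub> V = V \<oplus>\<^bsub>Q\<^esub> U"
    by (auto elim!: Q_cases simp: coset_add M.a_comm)
next
  fix U assume "U \<in> carrier Q"
  then show "\<zero>\<^bsub>Q\<^esub> \<oplus>\<^bsub>Q\<^esub> U = U"
  proof (elim Q_cases)
    fix x assume x: "x \<in> carrier M" "U = N +>\<^bsub>M\<^esub> x"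
    have "N = N +>\<^bsub>M\<^esub> \<zero>\<^bsub>M\<^esub>" using coset_eq_N[of "\<zero>\<^bsub>M\<^esub>"] NS.zero_closed by simp
    then show ?thesis using x coset_add[of "\<zero>\<^bsub>M\<^esub>" x] by (simp add: zero_Q)
  qed
next
  fix U assume "U \<in> carrier Q"
  then show "\<exists>V\<in>carrier Q. V \<oplus>\<^bsub>Q\<^esub> U = \<zero>\<^bsub>Q\<^esub>"
  proof (elim Q_cases)
    fix x assume x: "x \<in> carrier M" "U = N +>\<^bsub>M\<^esub> x"
    have "(N +>\<^bsub>M\<^esub> (\<ominus>\<^bsub>M\<^esub> x)) \<oplus>\<^bsub>Q\<^esub> U = N"
      using x coset_add[of "\<ominus>\<^bsub>M\<^esub> x" x] coset_eq_N[of "\<zero>\<^bsub>M\<^esub>"] NS.zero_closed by (simp add: M.l_neg)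
    then show ?thesis using x coset_in_Q[of "\<ominus>\<^bsub>M\<^esub> x"] by (auto simp: zero_Q)
  qed
qed

lemma left_module_Q: "left_module R Q"
  unfolding left_module_def
proof (intro conjI)
  show "ring R" by (rule ringR)
  show "abelian_group Q" by (rule abelian_group_Q)
  show "module_axioms R Q"
  proof (rule module_axioms.intro)
    fix a U assume "a \<in> carrier R" "U \<in> carrier Q"
    then show "a \<odot>\<^bsub>Q\<^esub> U \<in> carrier Q"
      by (auto elim!: Q_cases simp: coset_smult coset_in_Q sm_closed)
  next
    fix a b U assume "a \<in> carrier R" "b \<in> carrier R" "U \<in> carrier Q"
    then show "(a \<oplus>\<^bsub>R\<^esub> b) \<odot>\<^bsub>Q\<^esub> U = a \<odot>\<^bsub>Q\<^esub> U \<oplus>\<^bsub>Q\<^esub> b \<odot>\<^bsub>Q\<^esub> U"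
      by (auto elim!: Q_cases simp: coset_smult coset_add sm_closed sm_ldistr)
  next
    fix a U V assume "a \<in> carrier R" "U \<in> carrier Q" "V \<in> carrier Q"
    then show "a \<odot>\<^bsub>Q\<^esub> (U \<oplus>\<^bsub>Q\<^esub> V) = a \<odot>\<^bsub>Q\<^esub> U \<oplus>\<^bsub>Q\<^esub> a \<odot>\<^bsub>Q\<^esub> V"
      by (auto elim!: Q_cases simp: coset_smult coset_add sm_closed sm_rdistr)
  next
    fix a b U assume "a \<in> carrier R" "b \<in> carrier R" "U \<in> carrier Q"
    then show "(a \<otimes>\<^bsub>R\<^esub> b) \<odot>\<^bsub>Q\<^esub> U = a \<odot>\<^bsub>Q\<^esub> (b \<odot>\<^bsub>Q\<^esub> U)"
      by (auto elim!: Q_cases simp: coset_smult sm_closed sm_assoc)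
  next
    fix U assume "U \<in> carrier Q"
    then show "\<one>\<^bsub>R\<^esub> \<odot>\<^bsub>Q\<^esub> U = U"
      by (auto elim!: Q_cases simp: coset_smult sm_one)
  qed
qed

lemma ann_Q: assumes "x \<in> carrier M"
  shows "ann R Q (N +>\<^bsub>M\<^esub> x) = {r \<in> carrier R. r \<odot>\<^bsub>M\<^esub> x \<in> N}"
proof -
  have "r \<odot>\<^bsub>Q\<^esub> (N +>\<^bsub>M\<^esub> x) = \<zero>\<^bsub>Q\<^esub> \<longleftrightarrow> r \<odot>\<^bsub>M\<^esub> x \<in> N" if "r \<in> carrier R" for r
    using coset_smult[OF that assms] coset_eq_N[of "r \<odot>\<^bsub>M\<^esub> x"] sm_closed[OF that assms] zero_Q by simp
  then show ?thesis unfolding ann_def by auto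
qed

lemma ann_sub_Q: assumes "x \<in> carrier M"
  shows "ann R M x \<subseteq> ann R Q (N +>\<^bsub>M\<^esub> x)"
proof
  fix r assume "r \<in> ann R M x"
  then have "r \<in> carrier R" "r \<odot>\<^bsub>M\<^esub> x = \<zero>\<^bsub>M\<^esub>" unfolding ann_def by auto
  then show "r \<in> ann R Q (N +>\<^bsub>M\<^esub> x)" unfolding ann_Q[OF assms] using NS.zero_closed by simp
qed

end

context lmod begin

lemma ann_carrier: "ann R M x \<subseteq> carrier R" unfolding ann_def by auto

lemma xi_char:
  shows "gabriel R (xi R M)" "is_torsion R (xi R M) M"
    "\<And>F. gabriel R F \<Longrightarrow> is_torsion R F M \<Longrightarrow> xi R M \<subseteq> F"
proof -
  define XI where "XI = \<Inter>{F. gabriel R F \<and> is_torsion R F M}"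
  have all: "{I. left_ideal R I} \<in> {F. gabriel R F \<and> is_torsion R F M}"
    using R.gabriel_all ann_left_ideal unfolding is_torsion_def by auto
  have gXI: "gabriel R XI" unfolding XI_def by (rule R.gabriel_Inter) (use all in auto)
  have tXI: "is_torsion R XI M" unfolding XI_def is_torsion_def by auto
  have lXI: "XI \<subseteq> F" if "gabriel R F" "is_torsion R F M" for F using that unfolding XI_def by auto
  have "xi R M = XI" unfolding xi_def
    by (rule Least_equality) (use gXI tXI lXI in auto)
  then show "gabriel R (xi R M)" "is_torsion R (xi R M) M"
    "\<And>F. gabriel R F \<Longrightarrow> is_torsion R F M \<Longrightarrow> xi R M \<subseteq> F" using gXI tXI lXI by auto
qed

definition lin :: "'a set \<Rightarrow> ('a \<Rightarrow> 'b) \<Rightarrow> bool" where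
  "lin K f \<longleftrightarrow> (\<forall>x\<in>K. f x \<in> carrier M) \<and>
     (\<forall>x\<in>K. \<forall>y\<in>K. f (x \<oplus>\<^bsub>R\<^esub> y) = f x \<oplus>\<^bsub>M\<^esub> f y) \<and>
     (\<forall>r\<in>carrier R. \<forall>x\<in>K. f (r \<otimes>\<^bsub>R\<^esub> x) = r \<odot>\<^bsub>M\<^esub> f x)"

definition PQ :: "'a set set" where
  "PQ = {I. left_ideal R I \<and> (\<forall>K f. left_ideal R K \<and> lin K f \<and> (\<forall>x\<in>K \<inter> I. f x = \<zero>\<^bsub>M\<^esub>)
      \<longrightarrow> (\<forall>x\<in>K. f x = \<zero>\<^bsub>M\<^esub>))}"

lemma PQ_use: "I \<in> PQ \<Longrightarrow> left_ideal R K \<Longrightarrow> lin K f \<Longrightarrow> (\<And>x. x \<in> K \<Longrightarrow> x \<in> I \<Longrightarrow> f x = \<zero>\<^bsub>M\<^esub>)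
   \<Longrightarrow> x \<in> K \<Longrightarrow> f x = \<zero>\<^bsub>M\<^esub>"
  unfolding PQ_def by blast

lemma PQ_intro: "left_ideal R I \<Longrightarrow> (\<And>K f. left_ideal R K \<Longrightarrow> lin K f \<Longrightarrow> (\<And>x. x \<in> K \<Longrightarrow> x \<in> I \<Longrightarrow> f x = \<zero>\<^bsub>M\<^esub>)
   \<Longrightarrow> (\<And>x. x \<in> K \<Longrightarrow> f x = \<zero>\<^bsub>M\<^esub>)) \<Longrightarrow> I \<in> PQ"
  unfolding PQ_def by blast

lemma PQ_ideal: "I \<in> PQ \<Longrightarrow> left_ideal R I" unfolding PQ_def by blast

lemma lin_subset: "lin K f \<Longrightarrow> K' \<subseteq> K \<Longrightarrow> lin K' f"
  unfolding lin_def by blast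

lemma linD: assumes "lin K f"
  shows "\<And>x. x \<in> K \<Longrightarrow> f x \<in> carrier M"
    "\<And>x y. x \<in> K \<Longrightarrow> y \<in> K \<Longrightarrow> f (x \<oplus>\<^bsub>R\<^esub> y) = f x \<oplus>\<^bsub>M\<^esub> f y"
    "\<And>r x. r \<in> carrier R \<Longrightarrow> x \<in> K \<Longrightarrow> f (r \<otimes>\<^bsub>R\<^esub> x) = r \<odot>\<^bsub>M\<^esub> f x"
  using assms unfolding lin_def by blast+

lemma lin_cyclic: assumes "x \<in> carrier M" shows "lin (carrier R) (\<lambda>r. r \<odot>\<^bsub>M\<^esub> x)"
  unfolding lin_def using assms by (auto simp: sm_closed sm_ldistr sm_assoc)

lemma PQ_torsionfree: "is_torsionfree R PQ M"
  unfolding is_torsionfree_def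
proof (intro ballI impI)
  fix x assume x: "x \<in> carrier M" and a: "ann R M x \<in> PQ"
  have "(\<lambda>r. r \<odot>\<^bsub>M\<^esub> x) \<one>\<^bsub>R\<^esub> = \<zero>\<^bsub>M\<^esub>"
    by (rule PQ_use[OF a R.left_ideal_carrier lin_cyclic[OF x]]) (auto simp: ann_def)
  then show "x = \<zero>\<^bsub>M\<^esub>" using x by (simp add: sm_one)
qed

lemma PQ_greatest: assumes g: "gabriel R F" and tf: "is_torsionfree R F M" shows "F \<subseteq> PQ"
proof
  fix I assume I: "I \<in> F"
  show "I \<in> PQ"
  proof (rule PQ_intro)
    show "left_ideal R I" using R.gabrielD1[OF g I] .
    fix K f x assume K: "left_ideal R K" and f: "lin K f" and van: "\<And>x. x \<in> K \<Longrightarrow> x \<in> I \<Longrightarrow> f x = \<zero>\<^bsub>M\<^esub>"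
      and x: "x \<in> K"
    have xc: "x \<in> carrier R" using x R.left_idealD(1)[OF K] by auto
    have fx: "f x \<in> carrier M" using linD(1)[OF f x] .
    have "lquot R I x \<subseteq> ann R M (f x)"
    proof
      fix r assume "r \<in> lquot R I x"
      then have r: "r \<in> carrier R" "r \<otimes>\<^bsub>R\<^esub> x \<in> I" unfolding lquot_def by auto
      have "r \<otimes>\<^bsub>R\<^esub> x \<in> K" using R.left_idealD(5)[OF K r(1) x] .
      then have "f (r \<otimes>\<^bsub>R\<^esub> x) = \<zero>\<^bsub>M\<^esub>" using van r(2) by blast
      then show "r \<in> ann R M (f x)" using linD(3)[OF f r(1) x] r(1) unfolding ann_def by simp
    qed
    then have "ann R M (f x) \<in> F"
      using R.gabriel_up[OF g R.gabrielD5[OF g I xc] ann_left_ideal[OF fx]] by blast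
    then show "f x = \<zero>\<^bsub>M\<^esub>" using tf fx unfolding is_torsionfree_def by blast
  qed
qed

end

context lmod begin

lemma lin_zero: assumes K: "left_ideal R K" and f: "lin K f" shows "f \<zero>\<^bsub>R\<^esub> = \<zero>\<^bsub>M\<^esub>"
proof -
  have z: "\<zero>\<^bsub>R\<^esub> \<in> K" using R.left_idealD(2)[OF K] .
  have "f (\<zero>\<^bsub>R\<^esub> \<otimes>\<^bsub>R\<^esub> \<zero>\<^bsub>R\<^esub>) = \<zero>\<^bsub>R\<^esub> \<odot>\<^bsub>M\<^esub> f \<zero>\<^bsub>R\<^esub>" using linD(3)[OF f _ z] by simp
  then show ?thesis using sm_zero_l[OF linD(1)[OF f z]] by simp
qed

lemma PQ_gabriel: "gabriel R PQ"
  unfolding gabriel_def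
proof (intro conjI ballI allI impI)
  fix I assume "I \<in> PQ" then show "left_ideal R I" by (rule PQ_ideal)
next
  show "carrier R \<in> PQ"
  proof (rule PQ_intro[OF R.left_ideal_carrier])
    fix K f x assume K: "left_ideal R K" "lin K f" "\<And>x. x \<in> K \<Longrightarrow> x \<in> carrier R \<Longrightarrow> f x = \<zero>\<^bsub>M\<^esub>" "x \<in> K"
    then show "f x = \<zero>\<^bsub>M\<^esub>" using R.left_idealD(1)[OF K(1)] by auto
  qed
next
  fix I J assume I: "I \<in> PQ" and J: "left_ideal R J \<and> I \<subseteq> J"
  show "J \<in> PQ"
  proof (rule PQ_intro)
    show "left_ideal R J" using J by simp
    fix K f x assume K: "left_ideal R K" "lin K f" "\<And>x. x \<in> K \<Longrightarrow> x \<in> J \<Longrightarrow> f x = \<zero>\<^bsub>M\<^esub>" "x \<in> K"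
    show "f x = \<zero>\<^bsub>M\<^esub>" by (rule PQ_use[OF I K(1,2) _ K(4)]) (use K(3) J in auto)
  qed
next
  fix I1 I2 assume I1: "I1 \<in> PQ" and I2: "I2 \<in> PQ"
  show "I1 \<inter> I2 \<in> PQ"
  proof (rule PQ_intro)
    show "left_ideal R (I1 \<inter> I2)" using R.left_ideal_Int PQ_ideal I1 I2 by blast
    fix K f x assume K: "left_ideal R K" "lin K f" "\<And>x. x \<in> K \<Longrightarrow> x \<in> I1 \<inter> I2 \<Longrightarrow> f x = \<zero>\<^bsub>M\<^esub>" "x \<in> K"
    have K1: "left_ideal R (K \<inter> I1)" using R.left_ideal_Int K(1) PQ_ideal[OF I1] by blast
    have "f y = \<zero>\<^bsub>M\<^esub>" if "y \<in> K \<inter> I1" for y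
      by (rule PQ_use[OF I2 K1 lin_subset[OF K(2)] _ that]) (use K(3) in auto)
    then show "f x = \<zero>\<^bsub>M\<^esub>" using PQ_use[OF I1 K(1,2) _ K(4)] by blast
  qed
next
  fix I a assume I: "I \<in> PQ" and a: "a \<in> carrier R"
  have Iid: "left_ideal R I" using PQ_ideal[OF I] .
  show "lquot R I a \<in> PQ"
  proof (rule PQ_intro)
    show "left_ideal R (lquot R I a)" by (rule R.left_ideal_lquot[OF Iid a])
    fix K f x assume K: "left_ideal R K" and f: "lin K f"
      and van: "\<And>x. x \<in> K \<Longrightarrow> x \<in> lquot R I a \<Longrightarrow> f x = \<zero>\<^bsub>M\<^esub>" and x: "x \<in> K"
    note KD = R.left_idealD[OF K]
    have Kc: "\<And>k. k \<in> K \<Longrightarrow> k \<in> carrier R" using KD(1) by auto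
    define Ka where "Ka = (\<lambda>k. k \<otimes>\<^bsub>R\<^esub> a) ` K"
    have Ka_id: "left_ideal R Ka"
    proof (rule R.left_idealI)
      show "Ka \<subseteq> carrier R" unfolding Ka_def using Kc a by auto
      show "\<zero>\<^bsub>R\<^esub> \<in> Ka" unfolding Ka_def using KD(2) a by (auto intro!: image_eqI[of _ _ "\<zero>\<^bsub>R\<^esub>"])
      show "y \<oplus>\<^bsub>R\<^esub> z \<in> Ka" if yz: "y \<in> Ka" "z \<in> Ka" for y z
      proof -
        obtain k k' where "k \<in> K" "k' \<in> K" "y = k \<otimes>\<^bsub>R\<^esub> a" "z = k' \<otimes>\<^bsub>R\<^esub> a" using yz unfolding Ka_def by auto
        then show ?thesis unfolding Ka_def using Kc a KD(3)
          by (auto simp: R.l_distr intro!: image_eqI[of _ _ "k \<oplus>\<^bsub>R\<^esub> k'"])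
      qed
      show "\<ominus>\<^bsub>R\<^esub> y \<in> Ka" if yz: "y \<in> Ka" for y
      proof -
        obtain k where "k \<in> K" "y = k \<otimes>\<^bsub>R\<^esub> a" using yz unfolding Ka_def by auto
        then show ?thesis unfolding Ka_def using Kc a KD(4)
          by (auto simp: R.l_minus intro!: image_eqI[of _ _ "\<ominus>\<^bsub>R\<^esub> k"])
      qed
      show "r \<otimes>\<^bsub>R\<^esub> y \<in> Ka" if yz: "r \<in> carrier R" "y \<in> Ka" for r y
      proof -
        obtain k where "k \<in> K" "y = k \<otimes>\<^bsub>R\<^esub> a" using yz unfolding Ka_def by auto
        then show ?thesis unfolding Ka_def using Kc a KD(5) yz(1)
          by (auto simp: R.m_assoc intro!: image_eqI[of _ _ "r \<otimes>\<^bsub>R\<^esub> k"])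
      qed
    qed
    define g where "g y = f (SOME k. k \<in> K \<and> y = k \<otimes>\<^bsub>R\<^esub> a)" for y
    have key: "g (k \<otimes>\<^bsub>R\<^esub> a) = f k" if k: "k \<in> K" for k
    proof -
      define k' where "k' = (SOME k'. k' \<in> K \<and> k \<otimes>\<^bsub>R\<^esub> a = k' \<otimes>\<^bsub>R\<^esub> a)"
      have "k' \<in> K \<and> k \<otimes>\<^bsub>R\<^esub> a = k' \<otimes>\<^bsub>R\<^esub> a" unfolding k'_def by (rule someI[of _ k]) (use k in simp)
      then have k': "k' \<in> K" "k \<otimes>\<^bsub>R\<^esub> a = k' \<otimes>\<^bsub>R\<^esub> a" by auto
      have kc: "k \<in> carrier R" "k' \<in> carrier R" using Kc k k'(1) by auto
      define d where "d = k \<oplus>\<^bsub>R\<^esub> \<ominus>\<^bsub>R\<^esub> k'"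
      have dK: "d \<in> K" unfolding d_def using KD(3)[OF k KD(4)[OF k'(1)]] .
      have "d \<otimes>\<^bsub>R\<^esub> a = k \<otimes>\<^bsub>R\<^esub> a \<oplus>\<^bsub>R\<^esub> \<ominus>\<^bsub>R\<^esub> (k' \<otimes>\<^bsub>R\<^esub> a)"
        unfolding d_def using kc a by (simp add: R.l_distr R.l_minus)
      also have "\<dots> = \<zero>\<^bsub>R\<^esub>" using k'(2) kc a by (simp add: R.r_neg)
      finally have "d \<in> lquot R I a" unfolding lquot_def using R.left_idealD(2)[OF Iid] dK Kc by auto
      then have fd: "f d = \<zero>\<^bsub>M\<^esub>" using van dK by blast
      have "k' \<oplus>\<^bsub>R\<^esub> d = k" unfolding d_def using kc
        by (metis R.a_inv_closed R.a_lcomm R.r_neg R.r_zero)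
      then have "f k = f k' \<oplus>\<^bsub>M\<^esub> f d" using linD(2)[OF f k'(1) dK] by simp
      then have "f k = f k'" using fd linD(1)[OF f k'(1)] by simp
      moreover have "g (k \<otimes>\<^bsub>R\<^esub> a) = f k'" unfolding g_def k'_def by simp
      ultimately show ?thesis by simp
    qed
    have lg: "lin Ka g" unfolding lin_def
    proof (intro conjI ballI)
      fix y assume "y \<in> Ka"
      then obtain k where "k \<in> K" "y = k \<otimes>\<^bsub>R\<^esub> a" unfolding Ka_def by auto
      then show "g y \<in> carrier M" using key linD(1)[OF f] by simp
    next
      fix y z assume "y \<in> Ka" "z \<in> Ka"
      then obtain k k' where kk: "k \<in> K" "k' \<in> K" "y = k \<otimes>\<^bsub>R\<^esub> a" "z = k' \<otimes>\<^bsub>R\<^esub> a" unfolding Ka_def by auto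
      then have "y \<oplus>\<^bsub>R\<^esub> z = (k \<oplus>\<^bsub>R\<^esub> k') \<otimes>\<^bsub>R\<^esub> a" using Kc a by (simp add: R.l_distr)
      then show "g (y \<oplus>\<^bsub>R\<^esub> z) = g y \<oplus>\<^bsub>M\<^esub> g z"
        using kk key KD(3)[OF kk(1,2)] linD(2)[OF f kk(1,2)] by simp
    next
      fix r y assume r: "r \<in> carrier R" and "y \<in> Ka"
      then obtain k where kk: "k \<in> K" "y = k \<otimes>\<^bsub>R\<^esub> a" unfolding Ka_def by auto
      then have "r \<otimes>\<^bsub>R\<^esub> y = (r \<otimes>\<^bsub>R\<^esub> k) \<otimes>\<^bsub>R\<^esub> a" using Kc a r by (simp add: R.m_assoc)
      then show "g (r \<otimes>\<^bsub>R\<^esub> y) = r \<odot>\<^bsub>M\<^esub> g y"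
        using kk key KD(5)[OF r kk(1)] linD(3)[OF f r kk(1)] by simp
    qed
    have "g (x \<otimes>\<^bsub>R\<^esub> a) = \<zero>\<^bsub>M\<^esub>"
    proof (rule PQ_use[OF I Ka_id lg])
      fix y assume "y \<in> Ka" "y \<in> I"
      then obtain k where kk: "k \<in> K" "y = k \<otimes>\<^bsub>R\<^esub> a" unfolding Ka_def by auto
      then have "k \<in> lquot R I a" using \<open>y \<in> I\<close> Kc unfolding lquot_def by auto
      then show "g y = \<zero>\<^bsub>M\<^esub>" using kk key van by simp
    next
      show "x \<otimes>\<^bsub>R\<^esub> a \<in> Ka" unfolding Ka_def using x by auto
    qed
    then show "f x = \<zero>\<^bsub>M\<^esub>" using key[OF x] by simp
  qed
next
  fix J assume J: "left_ideal R J \<and> (\<exists>I\<in>PQ. \<forall>a\<in>I. lquot R J a \<in> PQ)"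
  then obtain I where I: "I \<in> PQ" "\<And>a. a \<in> I \<Longrightarrow> lquot R J a \<in> PQ" by auto
  show "J \<in> PQ"
  proof (rule PQ_intro)
    show "left_ideal R J" using J by simp
    fix K f x assume K: "left_ideal R K" and f: "lin K f"
      and van: "\<And>x. x \<in> K \<Longrightarrow> x \<in> J \<Longrightarrow> f x = \<zero>\<^bsub>M\<^esub>" and x: "x \<in> K"
    note KD = R.left_idealD[OF K]
    have Kc: "\<And>k. k \<in> K \<Longrightarrow> k \<in> carrier R" using KD(1) by auto
    have "f a = \<zero>\<^bsub>M\<^esub>" if aK: "a \<in> K" and aI: "a \<in> I" for a
    proof -
      define g where "g r = f (r \<otimes>\<^bsub>R\<^esub> a)" for r
      have lg: "lin (carrier R) g" unfolding lin_def g_def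
      proof (intro conjI ballI)
        fix r assume "r \<in> carrier R" then show "f (r \<otimes>\<^bsub>R\<^esub> a) \<in> carrier M" using linD(1)[OF f] KD(5) aK by blast
      next
        fix r s assume rs: "r \<in> carrier R" "s \<in> carrier R"
        then have "(r \<oplus>\<^bsub>R\<^esub> s) \<otimes>\<^bsub>R\<^esub> a = r \<otimes>\<^bsub>R\<^esub> a \<oplus>\<^bsub>R\<^esub> s \<otimes>\<^bsub>R\<^esub> a" using Kc aK by (simp add: R.l_distr)
        then show "f ((r \<oplus>\<^bsub>R\<^esub> s) \<otimes>\<^bsub>R\<^esub> a) = f (r \<otimes>\<^bsub>R\<^esub> a) \<oplus>\<^bsub>M\<^esub> f (s \<otimes>\<^bsub>R\<^esub> a)"
          using linD(2)[OF f KD(5)[OF rs(1) aK] KD(5)[OF rs(2) aK]] by simp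
      next
        fix r s assume rs: "r \<in> carrier R" "s \<in> carrier R"
        then have "(r \<otimes>\<^bsub>R\<^esub> s) \<otimes>\<^bsub>R\<^esub> a = r \<otimes>\<^bsub>R\<^esub> (s \<otimes>\<^bsub>R\<^esub> a)" using Kc aK by (simp add: R.m_assoc)
        then show "f ((r \<otimes>\<^bsub>R\<^esub> s) \<otimes>\<^bsub>R\<^esub> a) = r \<odot>\<^bsub>M\<^esub> f (s \<otimes>\<^bsub>R\<^esub> a)"
          using linD(3)[OF f rs(1) KD(5)[OF rs(2) aK]] by simp
      qed
      have "g \<one>\<^bsub>R\<^esub> = \<zero>\<^bsub>M\<^esub>"
      proof (rule PQ_use[OF I(2)[OF aI] R.left_ideal_carrier lg])
        fix r assume "r \<in> carrier R" "r \<in> lquot R J a"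
        then have "r \<otimes>\<^bsub>R\<^esub> a \<in> J" "r \<otimes>\<^bsub>R\<^esub> a \<in> K" using KD(5) aK unfolding lquot_def by auto
        then show "g r = \<zero>\<^bsub>M\<^esub>" unfolding g_def using van by blast
      qed simp
      then show ?thesis unfolding g_def using Kc aK by simp
    qed
    then show "f x = \<zero>\<^bsub>M\<^esub>" using PQ_use[OF I(1) K f _ x] by blast
  qed
qed

lemma chi_char:
  shows "gabriel R (chi R M)" "is_torsionfree R (chi R M) M"
    "\<And>F. gabriel R F \<Longrightarrow> is_torsionfree R F M \<Longrightarrow> F \<subseteq> chi R M"
proof -
  have "chi R M = PQ" unfolding chi_def
    by (rule Greatest_equality) (use PQ_gabriel PQ_torsionfree PQ_greatest in auto)
  then show "gabriel R (chi R M)" "is_torsionfree R (chi R M) M"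
    "\<And>F. gabriel R F \<Longrightarrow> is_torsionfree R F M \<Longrightarrow> F \<subseteq> chi R M"
    using PQ_gabriel PQ_torsionfree PQ_greatest by auto
qed

end

context lmod begin

lemma lmodq_N: "left_submodule R M N \<Longrightarrow> lmodq R M N"
  by (intro lmodq.intro lmod_axioms lmodq_axioms.intro)

lemma Qlmod: "left_submodule R M N \<Longrightarrow> lmod R (quot_module R M N)"
  using lmodq.left_module_Q[OF lmodq_N] by (intro lmod.intro)

lemma quot_elem:
  assumes N: "left_submodule R M N" and U: "U \<in> carrier (quot_module R M N)"
  shows "\<exists>x\<in>carrier M. ann R M x \<subseteq> ann R (quot_module R M N) U \<and>
     left_ideal R (ann R (quot_module R M N) U) \<and> (U = \<zero>\<^bsub>quot_module R M N\<^esub> \<longleftrightarrow> x \<in> N)"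
proof -
  interpret q: lmodq R M N by (rule lmodq_N[OF N])
  interpret Q: lmod R "quot_module R M N" by (rule Qlmod[OF N])
  obtain x where x: "x \<in> carrier M" "U = N +>\<^bsub>M\<^esub> x" using U by (elim q.Q_cases)
  show ?thesis
    using x q.ann_sub_Q[OF x(1)] Q.ann_left_ideal[OF U] q.coset_eq_N[OF x(1)] q.zero_Q by auto
qed

lemma xi_le_iff: "gabriel R F \<Longrightarrow> xi R M \<subseteq> F \<longleftrightarrow> is_torsion R F M"
  using xi_char unfolding is_torsion_def by blast

lemma not_torsion_quot:
  assumes g: "gabriel R F" and nt: "\<not> is_torsion R F M"
  shows "\<exists>N. left_submodule R M N \<and> N \<subset> carrier M \<and> F \<subseteq> chi R (quot_module R M N)"
proof (intro exI conjI)
  let ?N = "tor F"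
  show N: "left_submodule R M ?N" by (rule tor_submodule[OF g])
  show "?N \<subset> carrier M" using nt unfolding is_torsion_def tor_def by auto
  interpret Q: lmod R "quot_module R M ?N" by (rule Qlmod[OF N])
  have tf: "is_torsionfree R F (quot_module R M ?N)" unfolding is_torsionfree_def
  proof (intro ballI impI)
    fix U assume U: "U \<in> carrier (quot_module R M ?N)" and aU: "ann R (quot_module R M ?N) U \<in> F"
    interpret q: lmodq R M ?N by (rule lmodq_N[OF N])
    obtain x where x: "x \<in> carrier M" "U = ?N +>\<^bsub>M\<^esub> x" using U by (elim q.Q_cases)
    have L: "{r \<in> carrier R. r \<odot>\<^bsub>M\<^esub> x \<in> ?N} \<in> F" using aU q.ann_Q[OF x(1)] x(2) by simp
    have "ann R M x \<in> F"
    proof (rule R.gabrielD6[OF g ann_left_ideal[OF x(1)] L])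
      fix r assume "r \<in> {r \<in> carrier R. r \<odot>\<^bsub>M\<^esub> x \<in> ?N}"
      then have "r \<in> carrier R" "ann R M (r \<odot>\<^bsub>M\<^esub> x) \<in> F" unfolding tor_def by auto
      then show "lquot R (ann R M x) r \<in> F" using ann_smult[OF _ x(1)] by simp
    qed
    then have "x \<in> ?N" using x unfolding tor_def by auto
    then show "U = \<zero>\<^bsub>quot_module R M ?N\<^esub>" using x q.coset_eq_N q.zero_Q by simp
  qed
  show "F \<subseteq> chi R (quot_module R M ?N)" by (rule Q.chi_char(3)[OF g tf])
qed

lemma quot_not_torsion:
  assumes N: "left_submodule R M N" "N \<subset> carrier M" and sub: "F \<subseteq> chi R (quot_module R M N)"
  shows "\<not> is_torsion R F M"
proof
  assume t: "is_torsion R F M"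
  interpret Q: lmod R "quot_module R M N" by (rule Qlmod[OF N(1)])
  interpret q: lmodq R M N by (rule lmodq_N[OF N(1)])
  obtain m where m: "m \<in> carrier M" "m \<notin> N" using N(2) by auto
  have U: "N +>\<^bsub>M\<^esub> m \<in> carrier (quot_module R M N)" using q.coset_in_Q[OF m(1)] .
  have "ann R M m \<in> F" using t m unfolding is_torsion_def by auto
  then have "ann R M m \<in> chi R (quot_module R M N)" using sub by auto
  then have "ann R (quot_module R M N) (N +>\<^bsub>M\<^esub> m) \<in> chi R (quot_module R M N)"
    using R.gabriel_up[OF Q.chi_char(1) _ Q.ann_left_ideal[OF U] q.ann_sub_Q[OF m(1)]] by blast
  then have "N +>\<^bsub>M\<^esub> m = \<zero>\<^bsub>quot_module R M N\<^esub>"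
    using Q.chi_char(2) U unfolding is_torsionfree_def by blast
  then show False using m q.coset_eq_N q.zero_Q by simp
qed

end

theorem theorem4p4:
  fixes R :: "('a, 'c) ring_scheme" and M :: "('a, 'b, 'd) module_scheme"
  assumes "ring R" and "left_module R M"
  shows "hollow R (xi R M) \<longleftrightarrow>
    directed_set {chi R (quot_module R M N) | N. left_submodule R M N \<and> N \<subset> carrier M}"
proof -
  interpret lmod R M by (rule lmod.intro[OF assms(2)])
  let ?S = "{chi R (quot_module R M N) | N. left_submodule R M N \<and> N \<subset> carrier M}"
  show ?thesis
  proof
    assume h: "hollow R (xi R M)"
    show "directed_set ?S" unfolding directed_set_def
    proof (intro ballI)
      fix C1 C2 assume "C1 \<in> ?S" "C2 \<in> ?S"
      then obtain N1 N2 where N1: "left_submodule R M N1" "N1 \<subset> carrier M" "C1 = chi R (quot_module R M N1)"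
        and N2: "left_submodule R M N2" "N2 \<subset> carrier M" "C2 = chi R (quot_module R M N2)" by blast
      interpret Q1: lmod R "quot_module R M N1" by (rule Qlmod[OF N1(1)])
      interpret Q2: lmod R "quot_module R M N2" by (rule Qlmod[OF N2(1)])
      have gxi: "gabriel R (xi R M)" by (rule xi_char(1))
      define A where "A = xi R M \<inter> C1"
      define B where "B = xi R M \<inter> C2"
      have gA: "gabriel R A" unfolding A_def N1(3) by (rule R.gabriel_Int[OF gxi Q1.chi_char(1)])
      have gB: "gabriel R B" unfolding B_def N2(3) by (rule R.gabriel_Int[OF gxi Q2.chi_char(1)])
      have nA: "\<not> xi R M \<subseteq> A"
      proof
        assume "xi R M \<subseteq> A"
        then have "is_torsion R A M" using xi_le_iff[OF gA] by simp
        moreover have "A \<subseteq> chi R (quot_module R M N1)" unfolding A_def N1(3) by auto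
        ultimately show False using quot_not_torsion[OF N1(1,2)] by blast
      qed
      have nB: "\<not> xi R M \<subseteq> B"
      proof
        assume "xi R M \<subseteq> B"
        then have "is_torsion R B M" using xi_le_iff[OF gB] by simp
        moreover have "B \<subseteq> chi R (quot_module R M N2)" unfolding B_def N2(3) by auto
        ultimately show False using quot_not_torsion[OF N2(1,2)] by blast
      qed
      define T where "T = tors_join R A B"
      have gT: "gabriel R T" "A \<subseteq> T" "B \<subseteq> T" unfolding T_def using R.tors_join_gabriel[OF gA gB] by auto
      have "\<not> xi R M \<subseteq> T"
        using h nA nB gA gB unfolding hollow_def T_def A_def B_def by blast
      then have "\<not> is_torsion R T M" using xi_le_iff[OF gT(1)] by simp
      then obtain N3 where N3: "left_submodule R M N3" "N3 \<subset> carrier M" "T \<subseteq> chi R (quot_module R M N3)"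
        using not_torsion_quot[OF gT(1)] by blast
      interpret Q3: lmod R "quot_module R M N3" by (rule Qlmod[OF N3(1)])
      have le: "C \<subseteq> chi R (quot_module R M N3)" if gC: "gabriel R C" and CX: "xi R M \<inter> C \<subseteq> T" for C
      proof (rule Q3.chi_char(3)[OF gC])
        show "is_torsionfree R C (quot_module R M N3)" unfolding is_torsionfree_def
        proof (intro ballI impI)
          fix U assume U: "U \<in> carrier (quot_module R M N3)" and aC: "ann R (quot_module R M N3) U \<in> C"
          obtain x where x: "x \<in> carrier M" "ann R M x \<subseteq> ann R (quot_module R M N3) U"
            "left_ideal R (ann R (quot_module R M N3) U)"
            using quot_elem[OF N3(1) U] by blast
          have "ann R M x \<in> xi R M" using xi_char(2) x(1) unfolding is_torsion_def by blast
          then have "ann R (quot_module R M N3) U \<in> xi R M"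
            using R.gabriel_up[OF gxi _ x(3) x(2)] by blast
          then have "ann R (quot_module R M N3) U \<in> chi R (quot_module R M N3)"
            using aC CX N3(3) by blast
          then show "U = \<zero>\<^bsub>quot_module R M N3\<^esub>" using Q3.chi_char(2) U unfolding is_torsionfree_def by blast
        qed
      qed
      have "C1 \<subseteq> chi R (quot_module R M N3)"
        by (rule le) (use gT N1(3) Q1.chi_char(1) A_def in auto)
      moreover have "C2 \<subseteq> chi R (quot_module R M N3)"
        by (rule le) (use gT N2(3) Q2.chi_char(1) B_def in auto)
      moreover have "chi R (quot_module R M N3) \<in> ?S" using N3 by blast
      ultimately show "\<exists>C\<in>?S. C1 \<subseteq> C \<and> C2 \<subseteq> C" by blast
    qed
  next
    assume d: "directed_set ?S"
    show "hollow R (xi R M)" unfolding hollow_def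
    proof (intro conjI allI impI)
      show "gabriel R (xi R M)" by (rule xi_char(1))
      fix A B assume AB: "gabriel R A \<and> gabriel R B \<and> A \<subseteq> xi R M \<and> B \<subseteq> xi R M \<and> xi R M \<subseteq> tors_join R A B"
      then have gA: "gabriel R A" and gB: "gabriel R B" and J: "xi R M \<subseteq> tors_join R A B" by auto
      show "xi R M \<subseteq> A \<or> xi R M \<subseteq> B"
      proof (rule ccontr)
        assume "\<not> (xi R M \<subseteq> A \<or> xi R M \<subseteq> B)"
        then have "\<not> is_torsion R A M" "\<not> is_torsion R B M" using xi_le_iff gA gB by auto
        then obtain N1 N2 where N1: "left_submodule R M N1" "N1 \<subset> carrier M" "A \<subseteq> chi R (quot_module R M N1)"
          and N2: "left_submodule R M N2" "N2 \<subset> carrier M" "B \<subseteq> chi R (quot_module R M N2)"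
          using not_torsion_quot gA gB by meson
        have "chi R (quot_module R M N1) \<in> ?S" "chi R (quot_module R M N2) \<in> ?S" using N1 N2 by blast+
        then obtain C where C: "C \<in> ?S" "chi R (quot_module R M N1) \<subseteq> C" "chi R (quot_module R M N2) \<subseteq> C"
          using d unfolding directed_set_def by meson
        then obtain N3 where N3: "left_submodule R M N3" "N3 \<subset> carrier M" "C = chi R (quot_module R M N3)" by blast
        interpret Q3: lmod R "quot_module R M N3" by (rule Qlmod[OF N3(1)])
        have gC: "gabriel R C" using Q3.chi_char(1) N3(3) by simp
        have "tors_join R A B \<subseteq> C" unfolding tors_join_def using gC C N1(3) N2(3) by blast
        then have "xi R M \<subseteq> C" using J by blast
        then have "is_torsion R C M" using xi_le_iff[OF gC] by simp
        then show False using quot_not_torsion[OF N3(1,2)] N3(3) by blast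
      qed
    qed
  qed
qed

end
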